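(* Let $\mathcal S\in\{\mathcal C,\mathcal E\}$ and $k\ge1$. Then $$\Big(\sum_{n\ge0}\#_{\mathcal S}\{(0,0)\xrightarrow{n}(k-i,i)\}t^n\Big)_{0\le i\le k}=\sum_{(n_1,\dots,n_p)\in\mathcal C_k}t^p\,J(n_1)_{n_1+1}F_{n_1+1}\,J(n_2)_{n_1+n_2+1}F_{n_1+n_2+1}\cdots J(n_p)_{n_1+\cdots+n_p+1}F_{n_1+\cdots+n_p+1}.$$
   Context: Let $\mathbb N=\{0,1,2,\dots\}$, $\mathcal C=\{(-1,1),(0,1),(1,1),(1,0),(1,-1)\}$, $\mathcal E=\{(-1,1),(0,1),(1,1),(1,-1)\}$. For a step set $\mathcal S$, $\#_{\mathcal S}\{(0,0)\xrightarrow{n}(i,j)\}$ is the number of sequences $p_0=(0,0),p_1,\dots,p_n=(i,j)$ of points of $\mathbb N^2$ with $p_m-p_{m-1}\in\mathcal S$. $\mathcal C_k$ is the set of all ordered tuples $(n_1,\dots,n_p)$ ($p\ge1$) with each $n_r\in\{1,2\}$ and $n_1+\cdots+n_p=k$. For $n\ge2$, $F_n\in\mathcal M_{n,n}(\mathbb R(t))$ is the inverse of the $n\times n$ tridiagonal matrix with diagonal entries $1$ and entries immediately above and below the diagonal equal to $-t$; its entries are identified with their power series in $t$. For $m\ge3$, $A_m\in\mathcal M_{m-2,m}(\mathbb R)$ has entries $(A_m)_{r,r+1}=1$ ($1\le r\le m-2$) and $0$ elsewhere. For $m\ge2$, $D_m\in\mathcal M_{m-1,m}(\mathbb R)$ has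 $(D_m)_{r,r+1}=1$ and $0$ elsewhere, and $B_m\in\mathcal M_{m-1,m}(\mathbb R)$ has $(B_m)_{r,r}=(B_m)_{r,r+1}=1$ ($1\le r\le m-1$) and $0$ elsewhere. Set $J(2)_m=A_m$; $J(1)_m=B_m$ if $\mathcal S=\mathcal C$ and $J(1)_m=D_m$ if $\mathcal S=\mathcal E$. The entries of the row vector are indexed by $i=0,\dots,k$, corresponding to the point $(k-i,i)$. *)

theory Defs
  imports "Jordan_Normal_Form.Matrix" "HOL-Computational_Algebra.Formal_Power_Series"
begin

definition stepsC :: "(int \<times> int) set" where
  "stepsC = {(-1,1),(0,1),(1,1),(1,0),(1,-1)}"

definition stepsE :: "(int \<times> int) set" where
  "stepsE = {(-1,1),(0,1),(1,1),(1,-1)}"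

definition walk_pos :: "(int \<times> int) list \<Rightarrow> int \<times> int" where
  "walk_pos ss = ((\<Sum>s\<leftarrow>ss. fst s), (\<Sum>s\<leftarrow>ss. snd s))"

text \<open>Walks of length n from (0,0) to p staying in N^2, encoded by their step sequences
  (in bijection with the point sequences p_0 = (0,0), ..., p_n = p).\<close>
definition walks :: "(int \<times> int) set \<Rightarrow> nat \<Rightarrow> int \<times> int \<Rightarrow> (int \<times> int) list set" where
  "walks S n p = {ss. length ss = n \<and> set ss \<subseteq> S
      \<and> (\<forall>m\<le>n. 0 \<le> fst (walk_pos (take m ss)) \<and> 0 \<le> snd (walk_pos (take m ss)))
      \<and> walk_pos ss = p}"

definition num_walks :: "(int \<times> int) set \<Rightarrow> nat \<Rightarrow> int \<times> int \<Rightarrow> nat" where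
  "num_walks S n p = card (walks S n p)"

definition comps12 :: "nat \<Rightarrow> nat list set" where
  "comps12 k = {ns. ns \<noteq> [] \<and> set ns \<subseteq> {1,2} \<and> sum_list ns = k}"

definition tridiag :: "nat \<Rightarrow> real fps mat" where
  "tridiag n = mat n n (\<lambda>(r,c). if r = c then 1
                                 else if r = c + 1 \<or> c = r + 1 then - fps_X else 0)"

definition Fmat :: "nat \<Rightarrow> real fps mat" where
  "Fmat n = (THE M. M \<in> carrier_mat n n \<and> tridiag n * M = 1\<^sub>m n \<and> M * tridiag n = 1\<^sub>m n)"

text \<open>A_m, B_m, D_m, 0-indexed (paper's entry (r,c) is entry (r-1,c-1) here).\<close>
definition Amat :: "nat \<Rightarrow> real fps mat" where
  "Amat m = mat (m - 2) m (\<lambda>(r,c). if c = r + 1 then 1 else 0)"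

definition Bmat :: "nat \<Rightarrow> real fps mat" where
  "Bmat m = mat (m - 1) m (\<lambda>(r,c). if c = r \<or> c = r + 1 then 1 else 0)"

definition Dmat :: "nat \<Rightarrow> real fps mat" where
  "Dmat m = mat (m - 1) m (\<lambda>(r,c). if c = r + 1 then 1 else 0)"

definition Jmat :: "(int \<times> int) set \<Rightarrow> nat \<Rightarrow> nat \<Rightarrow> real fps mat" where
  "Jmat S n m = (if n = 2 then Amat m else if S = stepsC then Bmat m else Dmat m)"

text \<open>JF_prod S M s ns = M * J(n_1)_{s+n_1+1} F_{s+n_1+1} * J(n_2)_{s+n_1+n_2+1} ... \<close>
fun JF_prod :: "(int \<times> int) set \<Rightarrow> real fps mat \<Rightarrow> nat \<Rightarrow> nat list \<Rightarrow> real fps mat" where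
  "JF_prod S M s [] = M"
| "JF_prod S M s (n # ns) =
     JF_prod S (M * Jmat S n (s + n + 1) * Fmat (s + n + 1)) (s + n) ns"

end

theory Submission
  imports Defs "Jordan_Normal_Form.Determinant"
begin


definition fps0 :: "real fps \<Rightarrow> real" where "fps0 f = fps_nth f 0"

interpretation fps0: comm_ring_hom fps0
  by unfold_locales (auto simp: fps0_def)

lemma tridiag_carrier[simp]: "tridiag n \<in> carrier_mat n n"
  by (simp add: tridiag_def)

lemma det_tridiag0: "fps_nth (det (tridiag n)) 0 = 1"
proof -
  have "map_mat fps0 (tridiag n) = 1\<^sub>m n"
    by (rule eq_matI) (auto simp: tridiag_def fps0_def)
  hence "fps0 (det (tridiag n)) = 1" using fps0.hom_det[of "tridiag n"] by simp
  thus ?thesis by (simp add: fps0_def)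
qed

lemma Fmat_ex: "\<exists>M. M \<in> carrier_mat n n \<and> tridiag n * M = 1\<^sub>m n \<and> M * tridiag n = 1\<^sub>m n"
proof -
  let ?T = "tridiag n" let ?d = "det ?T"
  have inv: "?d * inverse ?d = 1" "inverse ?d * ?d = 1"
    using det_tridiag0[of n] by (auto intro: inverse_mult_eq_1 inverse_mult_eq_1')
  note adj = adj_mat[OF tridiag_carrier[of n]]
  define M where "M = inverse ?d \<cdot>\<^sub>m adj_mat ?T"
  have one: "inverse ?d \<cdot>\<^sub>m (?d \<cdot>\<^sub>m 1\<^sub>m n) = 1\<^sub>m n"
    by (rule eq_matI) (auto simp: inv mult.assoc[symmetric])
  have "M \<in> carrier_mat n n" using adj by (simp add: M_def)
  moreover have "?T * M = 1\<^sub>m n"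
    unfolding M_def using adj inv
    by (simp add: mult_smult_distrib[OF tridiag_carrier adj(1)] one)
  moreover have "M * ?T = 1\<^sub>m n"
    unfolding M_def using adj inv
    by (simp add: mult_smult_assoc_mat[OF adj(1) tridiag_carrier] one)
  ultimately show ?thesis by blast
qed

lemma Fmat_props: "Fmat n \<in> carrier_mat n n" "tridiag n * Fmat n = 1\<^sub>m n" "Fmat n * tridiag n = 1\<^sub>m n"
proof -
  have "\<exists>!M. M \<in> carrier_mat n n \<and> tridiag n * M = 1\<^sub>m n \<and> M * tridiag n = 1\<^sub>m n"
  proof (rule ex_ex1I[OF Fmat_ex])
    fix M M' assume a: "M \<in> carrier_mat n n \<and> tridiag n * M = 1\<^sub>m n \<and> M * tridiag n = 1\<^sub>m n"
      and b: "M' \<in> carrier_mat n n \<and> tridiag n * M' = 1\<^sub>m n \<and> M' * tridiag n = 1\<^sub>m n"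
    have "M = M * (tridiag n * M')" using a b by (metis carrier_matD(2) right_mult_one_mat')
    also have "\<dots> = (M * tridiag n) * M'" using a b assoc_mult_mat[of M n n "tridiag n" n M' n] by simp
    also have "\<dots> = M'" using a b left_mult_one_mat[of M' n n] by simp
    finally show "M = M'" .
  qed
  from theI'[OF this] show "Fmat n \<in> carrier_mat n n" "tridiag n * Fmat n = 1\<^sub>m n" "Fmat n * tridiag n = 1\<^sub>m n"
    unfolding Fmat_def by auto
qed



lemma walk_pos_snoc: "walk_pos (ss @ [s]) = (fst (walk_pos ss) + fst s, snd (walk_pos ss) + snd s)"
  by (simp add: walk_pos_def)

lemma walk_pos_nil: "walk_pos [] = (0,0)"
  by (simp add: walk_pos_def)

lemma walks_finite: "finite S \<Longrightarrow> finite (walks S n p)"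
  by (rule finite_subset[OF _ finite_lists_length_eq[of S n]]) (auto simp: walks_def)

lemma walks_neg: "\<not> (0 \<le> fst p \<and> 0 \<le> snd p) \<Longrightarrow> walks S n p = {}"
  by (auto simp: walks_def)

lemma walks_0: "walks S 0 p = (if p = (0,0) then {[]} else {})"
  by (auto simp: walks_def walk_pos_nil)

lemma walks_Suc:
  assumes "0 \<le> fst p" "0 \<le> snd p"
  shows "walks S (Suc n) p = (\<Union>s\<in>S. (\<lambda>ss. ss @ [s]) ` walks S n (fst p - fst s, snd p - snd s))"
proof (intro Set.set_eqI iffI)
  fix xs assume xs: "xs \<in> walks S (Suc n) p"
  then have "xs \<noteq> []" by (auto simp: walks_def)
  then obtain ss s where xss: "xs = ss @ [s]" by (metis rev_exhaust)
  have len: "length ss = n" using xs xss by (auto simp: walks_def)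
  have "s \<in> S" using xs xss by (auto simp: walks_def)
  moreover have "ss \<in> walks S n (fst p - fst s, snd p - snd s)"
  proof -
    have A: "\<forall>m\<le>Suc n. 0 \<le> fst (walk_pos (take m xs)) \<and> 0 \<le> snd (walk_pos (take m xs))"
      using xs by (auto simp: walks_def)
    have B: "0 \<le> fst (walk_pos (take m ss)) \<and> 0 \<le> snd (walk_pos (take m ss))" if "m \<le> n" for m
      using A[rule_format, of m] that len xss by auto
    show ?thesis using xs xss len B by (auto simp: walks_def walk_pos_snoc)
  qed
  ultimately show "xs \<in> (\<Union>s\<in>S. (\<lambda>ss. ss @ [s]) ` walks S n (fst p - fst s, snd p - snd s))"
    using xss by blast
next
  fix xs assume "xs \<in> (\<Union>s\<in>S. (\<lambda>ss. ss @ [s]) ` walks S n (fst p - fst s, snd p - snd s))"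
  then obtain s ss where s: "s \<in> S" and ss: "ss \<in> walks S n (fst p - fst s, snd p - snd s)"
    and xss: "xs = ss @ [s]" by blast
  have len: "length ss = n" using ss by (auto simp: walks_def)
  have C: "0 \<le> fst (walk_pos (take m xs)) \<and> 0 \<le> snd (walk_pos (take m xs))" if "m \<le> Suc n" for m
  proof (cases "m = Suc n")
    case True
    then have "take m xs = xs" using len xss by simp
    then show ?thesis using ss xss assms by (auto simp: walks_def walk_pos_snoc)
  next
    case False
    then have "take m xs = take m ss" "m \<le> n" using len xss that by auto
    then show ?thesis using ss by (auto simp: walks_def)
  qed
  show "xs \<in> walks S (Suc n) p" using ss s xss len C
    by (auto simp: walks_def walk_pos_snoc)
qed

lemma num_walks_Suc:
  assumes "finite S" "0 \<le> fst p" "0 \<le> snd p"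
  shows "num_walks S (Suc n) p = (\<Sum>s\<in>S. num_walks S n (fst p - fst s, snd p - snd s))"
proof -
  have "num_walks S (Suc n) p = card (\<Union>s\<in>S. (\<lambda>ss. ss @ [s]) ` walks S n (fst p - fst s, snd p - snd s))"
    unfolding num_walks_def walks_Suc[OF assms(2,3)] ..
  also have "\<dots> = (\<Sum>s\<in>S. card ((\<lambda>ss. ss @ [s]) ` walks S n (fst p - fst s, snd p - snd s)))"
    by (rule card_UN_disjoint) (auto simp: assms walks_finite)
  also have "\<dots> = (\<Sum>s\<in>S. num_walks S n (fst p - fst s, snd p - snd s))"
    by (rule sum.cong[OF refl], subst card_image) (auto simp: inj_on_def num_walks_def)
  finally show ?thesis .
qed



definition fw :: "(int \<times> int) set \<Rightarrow> int \<times> int \<Rightarrow> real fps" where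
  "fw S p = Abs_fps (\<lambda>n. real (num_walks S n p))"

lemma fw_neg: "\<not> (0 \<le> fst p \<and> 0 \<le> snd p) \<Longrightarrow> fw S p = 0"
  by (rule fps_ext) (simp add: fw_def num_walks_def walks_neg)

lemma fw_rec:
  assumes "finite S" "0 \<le> fst p" "0 \<le> snd p"
  shows "fw S p = (if p = (0,0) then 1 else 0) + fps_X * (\<Sum>s\<in>S. fw S (fst p - fst s, snd p - snd s))"
proof (rule fps_ext)
  fix n show "fps_nth (fw S p) n = fps_nth ((if p = (0,0) then 1 else 0) + fps_X * (\<Sum>s\<in>S. fw S (fst p - fst s, snd p - snd s))) n"
  proof (cases n)
    case 0 then show ?thesis by (simp add: fw_def num_walks_def walks_0)
  next
    case (Suc m) then show ?thesis
      using assms by (simp add: fw_def fps_X_mult_nth fps_sum_nth num_walks_Suc[OF assms])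
  qed
qed

definition gl :: "(int \<times> int) set \<Rightarrow> nat \<Rightarrow> nat \<Rightarrow> real fps" where
  "gl S k i = fw S (int k - int i, int i)"

lemma fw_gl: "0 \<le> a \<Longrightarrow> 0 \<le> b \<Longrightarrow> fw S (a, b) = gl S (nat (a + b)) (nat b)"
  by (simp add: gl_def)

lemma gl_rec:
  assumes S: "S = stepsC \<or> S = stepsE" and i: "i \<le> k"
  shows "gl S k i = (if k = 0 \<and> i = 0 then 1 else 0) + fps_X * (
      (if 1 \<le> i then gl S k (i - 1) else 0) + (if i < k then gl S k (i + 1) else 0)
    + (if 1 \<le> i then gl S (k - 1) (i - 1) else 0)
    + (if S = stepsC \<and> i < k then gl S (k - 1) i else 0)
    + (if 1 \<le> i \<and> i < k then gl S (k - 2) (i - 1) else 0))"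
proof -
  have fin: "finite S" using S by (auto simp: stepsC_def stepsE_def)
  let ?a = "int k - int i" let ?b = "int i"
  have e1: "fw S (?a - (-1), ?b - 1) = (if 1 \<le> i then gl S k (i - 1) else 0)"
    using i by (auto simp: fw_neg fw_gl nat_diff_distrib)
  have e2: "fw S (?a - 1, ?b - (-1)) = (if i < k then gl S k (i + 1) else 0)"
    using i by (auto simp: fw_neg fw_gl nat_add_distrib)
  have e3: "fw S (?a - 0, ?b - 1) = (if 1 \<le> i then gl S (k - 1) (i - 1) else 0)"
    using i by (auto simp: fw_neg fw_gl nat_diff_distrib)
  have e4: "fw S (?a - 1, ?b - 0) = (if i < k then gl S (k - 1) i else 0)"
    using i by (auto simp: fw_neg fw_gl nat_diff_distrib)
  have e5: "fw S (?a - 1, ?b - 1) = (if 1 \<le> i \<and> i < k then gl S (k - 2) (i - 1) else 0)"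
    using i by (auto simp: fw_neg fw_gl nat_diff_distrib)
  have p0: "((?a, ?b) = (0,0)) = (k = 0 \<and> i = 0)" using i by auto
  have "gl S k i = (if (?a, ?b) = (0,0) then 1 else 0) + fps_X * (\<Sum>s\<in>S. fw S (?a - fst s, ?b - snd s))"
    unfolding gl_def using fw_rec[OF fin, of "(?a,?b)"] i by simp
  also have "\<dots> = (if k = 0 \<and> i = 0 then 1 else 0) + fps_X * (
      (if 1 \<le> i then gl S k (i - 1) else 0) + (if i < k then gl S k (i + 1) else 0)
    + (if 1 \<le> i then gl S (k - 1) (i - 1) else 0)
    + (if S = stepsC \<and> i < k then gl S (k - 1) i else 0)
    + (if 1 \<le> i \<and> i < k then gl S (k - 2) (i - 1) else 0))"
  proof (cases "S = stepsC")
    case True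
    show ?thesis unfolding p0 using e1 e2 e3 e4 e5 True
      by (simp add: stepsC_def algebra_simps)
  next
    case False
    then have "S = stepsE" "stepsE \<noteq> stepsC" using S by (auto simp: stepsC_def stepsE_def)
    then show ?thesis unfolding p0 using e1 e2 e3 e4 e5 False
      by (simp add: stepsE_def algebra_simps)
  qed
  finally show ?thesis .
qed



definition cc :: "(int \<times> int) set \<Rightarrow> (nat \<Rightarrow> nat \<Rightarrow> real fps) \<Rightarrow> nat \<Rightarrow> nat \<Rightarrow> real fps" where
  "cc S u k j = (if k = 0 \<and> j = 0 then 1 else 0) + fps_X * (
      (if 1 \<le> j \<and> j \<le> k then u (k - 1) (j - 1) else 0)
    + (if S = stepsC \<and> j < k then u (k - 1) j else 0)
    + (if 1 \<le> j \<and> j < k then u (k - 2) (j - 1) else 0))"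

lemma tridiag_dims[simp]: "dim_row (tridiag n) = n" "dim_col (tridiag n) = n"
  by (simp_all add: tridiag_def)

lemma Fmat_dims[simp]: "dim_row (Fmat n) = n" "dim_col (Fmat n) = n"
  using Fmat_props(1)[of n] by auto

lemma tridiag_sum:
  assumes i: "i \<le> k"
  shows "(\<Sum>j<k+1. u j * tridiag (k+1) $$ (j,i)) =
     u i - fps_X * ((if 1 \<le> i then u (i - 1) else 0) + (if i < k then u (i + 1) else 0))"
proof -
  have "(\<Sum>j<k+1. u j * tridiag (k+1) $$ (j,i)) =
     (\<Sum>j<k+1. (if j = i then u i else 0) + (if j = i + 1 then - fps_X * u (i+1) else 0)
        + (if j + 1 = i then - fps_X * u (i - 1) else 0))"
    by (rule sum.cong[OF refl]) (use i in \<open>auto simp: tridiag_def\<close>)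
  also have "\<dots> = u i - fps_X * ((if 1 \<le> i then u (i - 1) else 0) + (if i < k then u (i + 1) else 0))"
  proof -
    have a: "(\<Sum>j<k+1. (if j + 1 = i then - fps_X * u (i - 1) else 0)) = (if 1 \<le> i then - fps_X * u (i - 1) else 0)"
    proof (cases "1 \<le> i")
      case True
      have "(\<Sum>j<k+1. (if j + 1 = i then - fps_X * u (i - 1) else 0)) = (\<Sum>j<k+1. (if j = i - 1 then - fps_X * u (i - 1) else 0))"
        by (rule sum.cong) (use True in auto)
      then show ?thesis using True i by simp
    qed auto
    show ?thesis using i by (simp only: sum.distrib a sum.delta finite_lessThan) (simp add: algebra_simps)
  qed
  finally show ?thesis .
qed

lemma solve:
  assumes "\<And>i. i \<le> k \<Longrightarrow> (\<Sum>j<k+1. u j * tridiag (k+1) $$ (j,i)) = c i" and i: "i \<le> k"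
  shows "u i = (\<Sum>j<k+1. c j * Fmat (k+1) $$ (j,i))"
proof -
  have TF: "(\<Sum>j<k+1. tridiag (k+1) $$ (m,j) * Fmat (k+1) $$ (j,i)) = (if m = i then 1 else 0)" if m: "m < k+1" for m
  proof -
    have "(tridiag (k+1) * Fmat (k+1)) $$ (m,i) = (if m = i then 1 else 0)"
      using Fmat_props(2)[of "k+1"] m i by simp
    moreover have "(tridiag (k+1) * Fmat (k+1)) $$ (m,i) = (\<Sum>j<k+1. tridiag (k+1) $$ (m,j) * Fmat (k+1) $$ (j,i))"
      using m i Fmat_props(1)[of "k+1"] by (simp add: scalar_prod_def atLeast0LessThan del: sum.lessThan_Suc)
    ultimately show ?thesis by simp
  qed
  have "(\<Sum>j<k+1. c j * Fmat (k+1) $$ (j,i)) = (\<Sum>j<k+1. (\<Sum>m<k+1. u m * tridiag (k+1) $$ (m,j)) * Fmat (k+1) $$ (j,i))"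
    using assms(1) by simp
  also have "\<dots> = (\<Sum>m<k+1. u m * (\<Sum>j<k+1. tridiag (k+1) $$ (m,j) * Fmat (k+1) $$ (j,i)))"
    by (simp only: sum_distrib_left sum_distrib_right mult.assoc) (rule sum.swap)
  also have "\<dots> = (\<Sum>m<k+1. (if m = i then u m else 0))"
    by (rule sum.cong[OF refl], subst TF) auto
  also have "\<dots> = u i" using i by (simp only: sum.delta finite_lessThan) simp
  finally show ?thesis by simp
qed

lemma gl_solve:
  assumes S: "S = stepsC \<or> S = stepsE" and i: "i \<le> k"
  shows "gl S k i = (\<Sum>j<k+1. cc S (gl S) k j * Fmat (k+1) $$ (j,i))"
proof (rule solve[OF _ i])
  fix i assume i: "i \<le> k"
  show "(\<Sum>j<k+1. gl S k j * tridiag (k+1) $$ (j,i)) = cc S (gl S) k i"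
    unfolding tridiag_sum[OF i] gl_rec[OF S i] cc_def using i by (auto simp: algebra_simps)
qed



definition Q :: "nat \<Rightarrow> nat list set" where
  "Q k = {ns. set ns \<subseteq> {1,2} \<and> sum_list ns = k}"

lemma len_le_sum: "set ns \<subseteq> {1,2} \<Longrightarrow> length ns \<le> sum_list (ns :: nat list)"
  by (induction ns) auto

lemma Q_finite: "finite (Q k)"
  by (rule finite_subset[OF _ finite_lists_length_le[of "{1,2::nat}" k]]) (unfold Q_def, use len_le_sum in blast, simp)

lemma Q_0: "Q 0 = {[]}"
proof -
  have "ns = []" if "set ns \<subseteq> {1,2}" "sum_list ns = (0::nat)" for ns
    using that by (cases ns) auto
  then show ?thesis by (auto simp: Q_def)
qed

lemma Q_Suc: "Q (Suc k) = (\<lambda>ns. ns @ [1]) ` Q k \<union> (if k \<ge> 1 then (\<lambda>ns. ns @ [2]) ` Q (k - 1) else {})"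
proof (intro Set.set_eqI iffI)
  fix xs assume xs: "xs \<in> Q (Suc k)"
  then have "xs \<noteq> []" by (auto simp: Q_def)
  then obtain ns n where xss: "xs = ns @ [n]" by (metis rev_exhaust)
  then have n: "n = 1 \<or> n = 2" and ns: "set ns \<subseteq> {1,2}" "sum_list ns + n = Suc k" using xs by (auto simp: Q_def)
  then show "xs \<in> (\<lambda>ns. ns @ [1]) ` Q k \<union> (if k \<ge> 1 then (\<lambda>ns. ns @ [2]) ` Q (k - 1) else {})"
    using xss by (auto simp: Q_def)
next
  fix xs assume "xs \<in> (\<lambda>ns. ns @ [1]) ` Q k \<union> (if k \<ge> 1 then (\<lambda>ns. ns @ [2]) ` Q (k - 1) else {})"
  then show "xs \<in> Q (Suc k)" by (auto simp: Q_def split: if_splits)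
qed

lemma comps12_Q: "k \<ge> 1 \<Longrightarrow> comps12 k = Q k"
  by (auto simp: comps12_def Q_def)

lemma JF_snoc: "JF_prod S M s (ns @ [n]) = JF_prod S M s ns * Jmat S n (s + sum_list ns + n + 1) * Fmat (s + sum_list ns + n + 1)"
  by (induction ns arbitrary: M s) (auto simp: add.assoc)

lemma Jmat_carrier: "n = 1 \<or> n = 2 \<Longrightarrow> Jmat S n m \<in> carrier_mat (m - n) m"
  by (auto simp: Jmat_def Amat_def Bmat_def Dmat_def)

lemma JF_carrier: "set ns \<subseteq> {1,2} \<Longrightarrow> JF_prod S (1\<^sub>m 1) 0 ns \<in> carrier_mat 1 (sum_list ns + 1)"
proof (induction ns rule: rev_induct)
  case Nil then show ?case by simp
next
  case (snoc n ns)
  then have n: "n = 1 \<or> n = 2" and ns: "set ns \<subseteq> {1,2}" by auto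
  have "Jmat S n (sum_list ns + n + 1) \<in> carrier_mat (sum_list ns + 1) (sum_list ns + n + 1)"
    using Jmat_carrier[OF n, of S "sum_list ns + n + 1"] n by auto
  then show ?case using snoc.IH[OF ns] Fmat_props(1)[of "sum_list ns + n + 1"]
    by (simp add: JF_snoc)
qed

lemma entry3:
  assumes P: "P \<in> carrier_mat 1 a" and J: "J \<in> carrier_mat a b" and F: "F \<in> carrier_mat b b" and i: "i < b"
  shows "(P * J * F) $$ (0,i) = (\<Sum>j<b. (\<Sum>l<a. P $$ (0,l) * J $$ (l,j)) * F $$ (j,i))"
proof -
  have "(P * J * F) $$ (0,i) = (\<Sum>j<b. (P * J) $$ (0,j) * F $$ (j,i))"
    using P J F i by (simp add: scalar_prod_def atLeast0LessThan del: sum.lessThan_Suc assoc_mult_mat)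
  also have "\<dots> = (\<Sum>j<b. (\<Sum>l<a. P $$ (0,l) * J $$ (l,j)) * F $$ (j,i))"
    by (rule sum.cong[OF refl]) (use P J in \<open>simp add: scalar_prod_def atLeast0LessThan del: sum.lessThan_Suc\<close>)
  finally show ?thesis .
qed



definition RR :: "(int \<times> int) set \<Rightarrow> nat \<Rightarrow> nat \<Rightarrow> real fps" where
  "RR S k i = (\<Sum>ns\<in>Q k. fps_X ^ length ns * JF_prod S (1\<^sub>m 1) 0 ns $$ (0,i))"

lemma part_sum:
  assumes fin: "finite X"
    and P: "\<And>ns. ns \<in> X \<Longrightarrow> P ns \<in> carrier_mat 1 a" and J: "J \<in> carrier_mat a b"
    and F: "F \<in> carrier_mat b b" and i: "i < b"
  shows "(\<Sum>ns\<in>X. fps_X ^ Suc (length ns) * (P ns * J * F) $$ (0,i))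
       = (\<Sum>j<b. fps_X * (\<Sum>l<a. (\<Sum>ns\<in>X. fps_X ^ length ns * P ns $$ (0,l)) * J $$ (l,j)) * F $$ (j,i))"
proof -
  have "(\<Sum>ns\<in>X. fps_X ^ Suc (length ns) * (P ns * J * F) $$ (0,i))
     = (\<Sum>ns\<in>X. fps_X ^ Suc (length ns) * (\<Sum>j<b. (\<Sum>l<a. P ns $$ (0,l) * J $$ (l,j)) * F $$ (j,i)))"
    by (rule sum.cong[OF refl]) (simp add: entry3[OF P J F i])
  also have "\<dots> = (\<Sum>ns\<in>X. \<Sum>j<b. \<Sum>l<a. fps_X * (fps_X ^ length ns * P ns $$ (0,l) * J $$ (l,j) * F $$ (j,i)))"
    by (simp add: sum_distrib_left sum_distrib_right mult.assoc del: power_Suc)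
       (simp add: algebra_simps)
  also have "\<dots> = (\<Sum>j<b. \<Sum>ns\<in>X. \<Sum>l<a. fps_X * (fps_X ^ length ns * P ns $$ (0,l) * J $$ (l,j) * F $$ (j,i)))"
    by (rule sum.swap)
  also have "\<dots> = (\<Sum>j<b. \<Sum>l<a. \<Sum>ns\<in>X. fps_X * (fps_X ^ length ns * P ns $$ (0,l) * J $$ (l,j) * F $$ (j,i)))"
    by (rule sum.cong[OF refl], rule sum.swap)
  also have "\<dots> = (\<Sum>j<b. fps_X * (\<Sum>l<a. (\<Sum>ns\<in>X. fps_X ^ length ns * P ns $$ (0,l)) * J $$ (l,j)) * F $$ (j,i))"
    by (simp add: sum_distrib_left sum_distrib_right mult.assoc)
  finally show ?thesis .
qed

lemma delta_lt: "(\<Sum>l<(k::nat). (if l = j then c else 0)) = (if j < k then c else (0::'a::comm_monoid_add))"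
  by (induction k) auto

lemma B_sum:
  assumes j: "j < k + 1"
  shows "(\<Sum>l<k. v l * Bmat (k+1) $$ (l,j)) = (if j < k then v j else 0) + (if 1 \<le> j then v (j - 1) else 0)"
proof (cases "1 \<le> j")
  case True
  have "(\<Sum>l<k. v l * Bmat (k+1) $$ (l,j)) = (\<Sum>l<k. (if l = j then v j else 0) + (if l = j - 1 then v (j - 1) else 0))"
    by (rule sum.cong[OF refl]) (use j True in \<open>auto simp: Bmat_def\<close>)
  also have "\<dots> = (if j < k then v j else 0) + (if 1 \<le> j then v (j - 1) else 0)"
    using j True by (simp only: sum.distrib delta_lt) auto
  finally show ?thesis .
next
  case False
  have "(\<Sum>l<k. v l * Bmat (k+1) $$ (l,j)) = (\<Sum>l<k. (if l = j then v j else 0))"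
    by (rule sum.cong[OF refl]) (use j False in \<open>auto simp: Bmat_def\<close>)
  also have "\<dots> = (if j < k then v j else 0) + (if 1 \<le> j then v (j - 1) else 0)"
    using j False by (simp only: delta_lt) auto
  finally show ?thesis .
qed

lemma D_sum:
  assumes j: "j < k + 1"
  shows "(\<Sum>l<k. v l * Dmat (k+1) $$ (l,j)) = (if 1 \<le> j then v (j - 1) else 0)"
proof (cases "1 \<le> j")
  case True
  have "(\<Sum>l<k. v l * Dmat (k+1) $$ (l,j)) = (\<Sum>l<k. (if l = j - 1 then v (j - 1) else 0))"
    by (rule sum.cong[OF refl]) (use j True in \<open>auto simp: Dmat_def\<close>)
  also have "\<dots> = (if 1 \<le> j then v (j - 1) else 0)"
    using j True by (simp only: delta_lt) auto
  finally show ?thesis .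
next
  case False
  have "(\<Sum>l<k. v l * Dmat (k+1) $$ (l,j)) = (\<Sum>l<k. 0)"
    by (rule sum.cong[OF refl]) (use j False in \<open>auto simp: Dmat_def\<close>)
  then show ?thesis using False by simp
qed

lemma A_sum:
  assumes j: "j < k + 1"
  shows "(\<Sum>l<k-1. v l * Amat (k+1) $$ (l,j)) = (if 1 \<le> j \<and> j < k then v (j - 1) else 0)"
proof (cases "1 \<le> j")
  case True
  have "(\<Sum>l<k-1. v l * Amat (k+1) $$ (l,j)) = (\<Sum>l<k-1. (if l = j - 1 then v (j - 1) else 0))"
    by (rule sum.cong[OF refl]) (use j True in \<open>auto simp: Amat_def\<close>)
  also have "\<dots> = (if 1 \<le> j \<and> j < k then v (j - 1) else 0)"
    using j True by (simp only: delta_lt) auto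
  finally show ?thesis .
next
  case False
  have "(\<Sum>l<k-1. v l * Amat (k+1) $$ (l,j)) = (\<Sum>l<k-1. 0)"
    by (rule sum.cong[OF refl]) (use j False in \<open>auto simp: Amat_def\<close>)
  then show ?thesis using False by simp
qed



lemma Fmat_1: "Fmat 1 = 1\<^sub>m 1"
proof -
  have T: "tridiag 1 = 1\<^sub>m 1" by (rule eq_matI) (auto simp: tridiag_def)
  have "Fmat 1 = 1\<^sub>m 1 * Fmat 1" using Fmat_props(1)[of 1] by simp
  also have "\<dots> = 1\<^sub>m 1" using Fmat_props(2)[of 1] unfolding T .
  finally show ?thesis .
qed

lemma RR_0: "RR S 0 0 = 1"
  by (simp add: RR_def Q_0)

lemma RR_Suc:
  assumes i: "i < k + 2"
  shows "RR S (Suc k) i =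
    (\<Sum>ns\<in>Q k. fps_X ^ Suc (length ns) * (JF_prod S (1\<^sub>m 1) 0 ns * Jmat S 1 (k + 2) * Fmat (k + 2)) $$ (0,i))
  + (if k \<ge> 1 then (\<Sum>ns\<in>Q (k - 1). fps_X ^ Suc (length ns) * (JF_prod S (1\<^sub>m 1) 0 ns * Jmat S 2 (k + 2) * Fmat (k + 2)) $$ (0,i)) else 0)"
proof -
  let ?f = "\<lambda>ns. fps_X ^ length ns * JF_prod S (1\<^sub>m 1) 0 ns $$ (0,i)"
  have disj: "(\<lambda>ns. ns @ [1::nat]) ` Q k \<inter> (if k \<ge> 1 then (\<lambda>ns. ns @ [2]) ` Q (k - 1) else {}) = {}"
    by auto
  have "RR S (Suc k) i = sum ?f ((\<lambda>ns. ns @ [1]) ` Q k) + sum ?f (if k \<ge> 1 then (\<lambda>ns. ns @ [2]) ` Q (k - 1) else {})"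
    unfolding RR_def Q_Suc by (rule sum.union_disjoint) (auto simp: Q_finite)
  also have "sum ?f ((\<lambda>ns. ns @ [1]) ` Q k) = (\<Sum>ns\<in>Q k. fps_X ^ Suc (length ns) * (JF_prod S (1\<^sub>m 1) 0 ns * Jmat S 1 (k + 2) * Fmat (k + 2)) $$ (0,i))"
    by (subst sum.reindex) (auto simp: inj_on_def JF_snoc Q_def)
  also have "sum ?f (if k \<ge> 1 then (\<lambda>ns. ns @ [2]) ` Q (k - 1) else {}) = (if k \<ge> 1 then (\<Sum>ns\<in>Q (k - 1). fps_X ^ Suc (length ns) * (JF_prod S (1\<^sub>m 1) 0 ns * Jmat S 2 (k + 2) * Fmat (k + 2)) $$ (0,i)) else 0)"
  proof (cases "k \<ge> 1")
    case True
    have e: "Suc (Suc (Suc (k - Suc 0))) = Suc (Suc k)" using True by simp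
    have "sum ?f ((\<lambda>ns. ns @ [2]) ` Q (k - 1)) = (\<Sum>ns\<in>Q (k - 1). fps_X ^ Suc (length ns) * (JF_prod S (1\<^sub>m 1) 0 ns * Jmat S 2 (k + 2) * Fmat (k + 2)) $$ (0,i))"
      by (subst sum.reindex) (auto simp: inj_on_def JF_snoc Q_def e intro!: sum.cong)
    then show ?thesis using True by simp
  qed simp
  finally show ?thesis .
qed



lemma RR_solve:
  assumes i: "i \<le> k"
  shows "RR S k i = (\<Sum>j<k+1. cc S (RR S) k j * Fmat (k+1) $$ (j,i))"
proof (cases k)
  case 0
  then show ?thesis using i Fmat_1 by (simp add: RR_0 cc_def)
next
  case (Suc k')
  let ?F = "Fmat (k' + 2)"
  define t1 where "t1 j = (if 1 \<le> j then RR S k' (j - 1) else 0) + (if S = stepsC \<and> j < k' + 1 then RR S k' j else 0)" for j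
  define t2 where "t2 j = (if 1 \<le> j \<and> j < k' + 1 then RR S (k' - 1) (j - 1) else 0)" for j
  have ik: "i < k' + 2" using i Suc by simp
  have P1: "\<And>ns. ns \<in> Q k' \<Longrightarrow> JF_prod S (1\<^sub>m 1) 0 ns \<in> carrier_mat 1 (k' + 1)"
    using JF_carrier by (auto simp: Q_def)
  have J1: "Jmat S 1 (k' + 2) \<in> carrier_mat (k' + 1) (k' + 2)"
    using Jmat_carrier[of 1 S "k' + 2"] by simp
  have Fc: "?F \<in> carrier_mat (k' + 2) (k' + 2)" by (rule Fmat_props(1))
  have p1: "(\<Sum>ns\<in>Q k'. fps_X ^ Suc (length ns) * (JF_prod S (1\<^sub>m 1) 0 ns * Jmat S 1 (k' + 2) * ?F) $$ (0,i))
      = (\<Sum>j<k'+2. fps_X * t1 j * ?F $$ (j,i))"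
  proof -
    have "(\<Sum>ns\<in>Q k'. fps_X ^ Suc (length ns) * (JF_prod S (1\<^sub>m 1) 0 ns * Jmat S 1 (k' + 2) * ?F) $$ (0,i))
      = (\<Sum>j<k'+2. fps_X * (\<Sum>l<k'+1. RR S k' l * Jmat S 1 (k' + 2) $$ (l,j)) * ?F $$ (j,i))"
      unfolding RR_def by (rule part_sum[OF Q_finite P1 J1 Fc ik])
    also have "\<dots> = (\<Sum>j<k'+2. fps_X * t1 j * ?F $$ (j,i))"
    proof (rule sum.cong[OF refl])
      fix j assume "j \<in> {..<k'+2}"
      then have j: "j < (k' + 1) + 1" by simp
      have "(\<Sum>l<k'+1. RR S k' l * Jmat S 1 (k' + 2) $$ (l,j)) = t1 j"
      proof (cases "S = stepsC")
        case True
        then show ?thesis using B_sum[OF j, of "RR S k'"] by (simp add: Jmat_def t1_def add.commute)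
      next
        case False
        then show ?thesis using D_sum[OF j, of "RR S k'"] by (simp add: Jmat_def t1_def)
      qed
      then show "fps_X * (\<Sum>l<k'+1. RR S k' l * Jmat S 1 (k' + 2) $$ (l,j)) * ?F $$ (j,i) = fps_X * t1 j * ?F $$ (j,i)"
        by simp
    qed
    finally show ?thesis .
  qed
  have p2: "(if k' \<ge> 1 then (\<Sum>ns\<in>Q (k' - 1). fps_X ^ Suc (length ns) * (JF_prod S (1\<^sub>m 1) 0 ns * Jmat S 2 (k' + 2) * ?F) $$ (0,i)) else 0)
      = (\<Sum>j<k'+2. fps_X * t2 j * ?F $$ (j,i))"
  proof (cases "k' \<ge> 1")
    case False
    then show ?thesis by (simp add: t2_def)
  next
    case True
    have P2: "\<And>ns. ns \<in> Q (k' - 1) \<Longrightarrow> JF_prod S (1\<^sub>m 1) 0 ns \<in> carrier_mat 1 k'"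
      using JF_carrier True by (fastforce simp: Q_def)
    have J2: "Jmat S 2 (k' + 2) \<in> carrier_mat k' (k' + 2)"
      using Jmat_carrier[of 2 S "k' + 2"] by simp
    have "(\<Sum>ns\<in>Q (k' - 1). fps_X ^ Suc (length ns) * (JF_prod S (1\<^sub>m 1) 0 ns * Jmat S 2 (k' + 2) * ?F) $$ (0,i))
      = (\<Sum>j<k'+2. fps_X * (\<Sum>l<k'. RR S (k' - 1) l * Jmat S 2 (k' + 2) $$ (l,j)) * ?F $$ (j,i))"
      unfolding RR_def by (rule part_sum[OF Q_finite P2 J2 Fc ik])
    also have "\<dots> = (\<Sum>j<k'+2. fps_X * t2 j * ?F $$ (j,i))"
    proof (rule sum.cong[OF refl])
      fix j assume "j \<in> {..<k'+2}"
      then have j: "j < (k' + 1) + 1" by simp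
      have "(\<Sum>l<k'. RR S (k' - 1) l * Jmat S 2 (k' + 2) $$ (l,j)) = t2 j"
        using A_sum[OF j, of "RR S (k' - 1)"] by (simp add: Jmat_def t2_def)
      then show "fps_X * (\<Sum>l<k'. RR S (k' - 1) l * Jmat S 2 (k' + 2) $$ (l,j)) * ?F $$ (j,i) = fps_X * t2 j * ?F $$ (j,i)"
        by simp
    qed
    finally show ?thesis using True by simp
  qed
  have "RR S k i = (\<Sum>j<k'+2. fps_X * t1 j * ?F $$ (j,i)) + (\<Sum>j<k'+2. fps_X * t2 j * ?F $$ (j,i))"
    unfolding Suc RR_Suc[OF ik] p1 p2 ..
  also have "\<dots> = (\<Sum>j<k'+2. cc S (RR S) k j * ?F $$ (j,i))"
    unfolding sum.distrib[symmetric]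
    by (rule sum.cong[OF refl]) (auto simp: cc_def t1_def t2_def Suc algebra_simps)
  finally show ?thesis using Suc by simp
qed



lemma main_eq:
  assumes S: "S = stepsC \<or> S = stepsE"
  shows "\<forall>i\<le>k. gl S k i = RR S k i"
proof (induction k rule: less_induct)
  case (less k)
  show ?case
  proof (intro allI impI)
    fix i assume i: "i \<le> k"
    have c: "cc S (gl S) k j = cc S (RR S) k j" for j
    proof -
      have a: "1 \<le> j \<and> j \<le> k \<Longrightarrow> gl S (k - 1) (j - 1) = RR S (k - 1) (j - 1)"
        using less[of "k - 1"] by auto
      have b: "j < k \<Longrightarrow> gl S (k - 1) j = RR S (k - 1) j"
        using less[of "k - 1"] by auto
      have d: "1 \<le> j \<and> j < k \<Longrightarrow> gl S (k - 2) (j - 1) = RR S (k - 2) (j - 1)"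
        using less[of "k - 2"] by auto
      show ?thesis unfolding cc_def using a b d by auto
    qed
    show "gl S k i = RR S k i"
      unfolding gl_solve[OF S i] RR_solve[OF i] c ..
  qed
qed

theorem proposition2p11:
  fixes S :: "(int \<times> int) set" and k :: nat
  assumes "S = stepsC \<or> S = stepsE"
    and "k \<ge> 1"
  shows "\<forall>i\<le>k.
    Abs_fps (\<lambda>n. of_nat (num_walks S n (int k - int i, int i)) :: real)
    = (\<Sum>ns\<in>comps12 k. fps_X ^ length ns * (JF_prod S (1\<^sub>m 1) 0 ns) $$ (0, i))"
proof (intro allI impI)
  fix i assume i: "i \<le> k"
  have "Abs_fps (\<lambda>n. of_nat (num_walks S n (int k - int i, int i)) :: real) = gl S k i"
    by (simp add: gl_def fw_def)
  also have "\<dots> = RR S k i" using main_eq[OF assms(1)] i by blast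
  also have "\<dots> = (\<Sum>ns\<in>comps12 k. fps_X ^ length ns * (JF_prod S (1\<^sub>m 1) 0 ns) $$ (0, i))"
    by (simp add: RR_def comps12_Q[OF assms(2)])
  finally show "Abs_fps (\<lambda>n. of_nat (num_walks S n (int k - int i, int i)) :: real)
    = (\<Sum>ns\<in>comps12 k. fps_X ^ length ns * (JF_prod S (1\<^sub>m 1) 0 ns) $$ (0, i))" .
qed

end
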